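(* Let $G$ be a finite group, $n\ge 2$, put $g_1=1$, and let $g_2,\dots,g_n\in G$ be nontrivial elements (possibly with repetitions). Let $S=\mathscr M(G,n,n,C)$ where $C$ is the $n\times n$ matrix with $C_{ii}=g_i$ for all $i$ and $C_{ij}=1$ for $i\ne j$. Then both the minimal degree of a faithful action of $S$ by partial transformations and by total transformations equal $$\min\Big\{n\cdot|X|-\sum_{x\in X}\big|\{2\le i\le n\mid g_i\in G_x\}\big|\Big\},$$ where $X$ runs over all faithful right $G$-sets (equivalently, all faithful $G$-sets with no two isomorphic orbits) and $G_x$ is the stabilizer of $x$. In particular, if $g_2=\cdots=g_n=g\ne1$, both minimal degrees equal $\min\{n\deg(\rho)-(n-1)|\mathrm{Fix}(\rho(g))|\}$ as $\rho$ runs over all faithful permutation representations of $G$ (equivalently, those with no two isomorphic orbits).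
   Context: For a group $G$ and matrix $C\colon[n]\times[n]\to G$, the Rees matrix semigroup $\mathscr M(G,n,n,C)$ is $[n]\times G\times[n]$ with $(i,g,j)(k,h,l)=(i,gC_{jk}h,l)$. The minimal degree of a faithful action by partial (resp. total) transformations is the least $m$ such that $S$ embeds in the monoid of partial (resp. total) maps of an $m$-set acting on the right. $\mathrm{Fix}(\rho(g))$ is the set of points fixed by $\rho(g)$; $\deg(\rho)$ is the number of points. *)

theory Defs
  imports "HOL-Algebra.Group"
begin

definition rees_carrier :: "('a, 'b) monoid_scheme \<Rightarrow> nat \<Rightarrow> (nat \<times> 'a \<times> nat) set" where
  "rees_carrier G n = {1..n} \<times> carrier G \<times> {1..n}"

definition rees_mult ::
  "('a, 'b) monoid_scheme \<Rightarrow> (nat \<Rightarrow> nat \<Rightarrow> 'a) \<Rightarrow> nat \<times> 'a \<times> nat \<Rightarrow> nat \<times> 'a \<times> nat \<Rightarrow> nat \<times> 'a \<times> nat" where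
  "rees_mult G C s t = (case s of (i, g, j) \<Rightarrow> case t of (k, h, l) \<Rightarrow>
      (i, g \<otimes>\<^bsub>G\<^esub> C j k \<otimes>\<^bsub>G\<^esub> h, l))"

definition is_partial_transf :: "nat \<Rightarrow> (nat \<Rightarrow> nat option) \<Rightarrow> bool" where
  "is_partial_transf m f \<longleftrightarrow> (\<forall>x. (x \<ge> m \<longrightarrow> f x = None) \<and> (\<forall>y. f x = Some y \<longrightarrow> y < m))"

definition pcomp :: "(nat \<Rightarrow> nat option) \<Rightarrow> (nat \<Rightarrow> nat option) \<Rightarrow> nat \<Rightarrow> nat option" where
  "pcomp f g = (\<lambda>x. Option.bind (f x) g)"

definition is_total_transf :: "nat \<Rightarrow> (nat \<Rightarrow> nat) \<Rightarrow> bool" where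
  "is_total_transf m f \<longleftrightarrow> (\<forall>x. (x < m \<longrightarrow> f x < m) \<and> (x \<ge> m \<longrightarrow> f x = x))"

definition min_partial_degree :: "'s set \<Rightarrow> ('s \<Rightarrow> 's \<Rightarrow> 's) \<Rightarrow> nat" where
  "min_partial_degree S smul = (LEAST m. \<exists>\<phi>. (\<forall>s\<in>S. is_partial_transf m (\<phi> s)) \<and> inj_on \<phi> S \<and>
       (\<forall>s\<in>S. \<forall>t\<in>S. \<phi> (smul s t) = pcomp (\<phi> s) (\<phi> t)))"

definition min_total_degree :: "'s set \<Rightarrow> ('s \<Rightarrow> 's \<Rightarrow> 's) \<Rightarrow> nat" where
  "min_total_degree S smul = (LEAST m. \<exists>\<phi>. (\<forall>s\<in>S. is_total_transf m (\<phi> s)) \<and> inj_on \<phi> S \<and>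
       (\<forall>s\<in>S. \<forall>t\<in>S. \<phi> (smul s t) = \<phi> t \<circ> \<phi> s))"

definition right_action :: "('a, 'b) monoid_scheme \<Rightarrow> 'x set \<Rightarrow> ('x \<Rightarrow> 'a \<Rightarrow> 'x) \<Rightarrow> bool" where
  "right_action G X act \<longleftrightarrow>
     (\<forall>x\<in>X. \<forall>g\<in>carrier G. act x g \<in> X) \<and>
     (\<forall>x\<in>X. act x \<one>\<^bsub>G\<^esub> = x) \<and>
     (\<forall>x\<in>X. \<forall>g\<in>carrier G. \<forall>h\<in>carrier G. act (act x g) h = act x (g \<otimes>\<^bsub>G\<^esub> h))"

definition faithful_right_action :: "('a, 'b) monoid_scheme \<Rightarrow> 'x set \<Rightarrow> ('x \<Rightarrow> 'a \<Rightarrow> 'x) \<Rightarrow> bool" where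
  "faithful_right_action G X act \<longleftrightarrow> right_action G X act \<and>
     (\<forall>g\<in>carrier G. (\<forall>x\<in>X. act x g = x) \<longrightarrow> g = \<one>\<^bsub>G\<^esub>)"

definition stab :: "('a, 'b) monoid_scheme \<Rightarrow> ('x \<Rightarrow> 'a \<Rightarrow> 'x) \<Rightarrow> 'x \<Rightarrow> 'a set" where
  "stab G act x = {g \<in> carrier G. act x g = x}"

end

theory Submission
  imports Defs
begin

lemma total_to_partial:
  assumes "\<forall>s\<in>S. is_total_transf m (\<phi> s)" "inj_on \<phi> S"
    "\<forall>s\<in>S. \<forall>t\<in>S. \<phi> (smul s t) = \<phi> t \<circ> \<phi> s"
  shows "\<exists>\<psi>. (\<forall>s\<in>S. is_partial_transf m (\<psi> s)) \<and> inj_on \<psi> S \<and>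
       (\<forall>s\<in>S. \<forall>t\<in>S. \<psi> (smul s t) = pcomp (\<psi> s) (\<psi> t))"
proof -
  define \<psi> where "\<psi> s = (\<lambda>x. if x < m then Some (\<phi> s x) else None)" for s
  have 1: "\<forall>s\<in>S. is_partial_transf m (\<psi> s)"
    using assms(1) by (auto simp: \<psi>_def is_partial_transf_def is_total_transf_def)
  have 2: "inj_on \<psi> S"
  proof (rule inj_onI)
    fix s t assume st: "s \<in> S" "t \<in> S" "\<psi> s = \<psi> t"
    have "\<phi> s = \<phi> t"
    proof
      fix x show "\<phi> s x = \<phi> t x"
      proof (cases "x < m")
        case True then show ?thesis using fun_cong[OF st(3), of x] by (simp add: \<psi>_def)
      next
        case False then show ?thesis using assms(1) st by (simp add: is_total_transf_def)
      qed
    qed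
    then show "s = t" using assms(2) st by (meson inj_onD)
  qed
  have 3: "\<forall>s\<in>S. \<forall>t\<in>S. \<psi> (smul s t) = pcomp (\<psi> s) (\<psi> t)"
    using assms(1,3) by (auto simp: \<psi>_def pcomp_def is_total_transf_def fun_eq_iff)
  show ?thesis using 1 2 3 by blast
qed

locale rees_ctx = group G for G :: "('a, 'b) monoid_scheme" (structure) +
  fixes n :: nat and g :: "nat \<Rightarrow> 'a" and C :: "nat \<Rightarrow> nat \<Rightarrow> 'a"
  assumes fin: "finite (carrier G)" and n2: "n \<ge> 2" and g1: "g 1 = \<one>"
    and gi: "\<forall>i\<in>{2..n}. g i \<in> carrier G \<and> g i \<noteq> \<one>"
    and Cdef: "\<forall>i j. C i j = (if i = j then g i else \<one>)"
begin

definition fml :: "nat set \<Rightarrow> (nat \<Rightarrow> 'a \<Rightarrow> nat) \<Rightarrow> nat" where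
  "fml X act = n * card X - (\<Sum>x\<in>X. card {i \<in> {2..n}. g i \<in> stab G act x})"

lemma g_car: "i \<in> {1..n} \<Longrightarrow> g i \<in> carrier G"
  using gi g1 by (cases "i = 1") auto

lemma C_car: "k \<in> {1..n} \<Longrightarrow> C k j \<in> carrier G"
  using Cdef g_car by simp

lemma C_k1: "k \<in> {1..n} \<Longrightarrow> C k 1 = \<one>"
  using Cdef g1 by simp

lemma C_1j: "C 1 j = \<one>"
  using Cdef g1 by (cases "j = 1") auto

lemma C_1j': "C (Suc 0) j = \<one>" using C_1j by simp

lemma C_k1': "k \<in> {1..n} \<Longrightarrow> C k (Suc 0) = \<one>" using C_k1 by simp

lemma C_kk: "C k k = g k" using Cdef by simp

lemma C_ne: "k \<noteq> j \<Longrightarrow> C k j = \<one>" using Cdef by simp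

lemma rm: "rees_mult G C (i,a,j) (k,b,l) = (i, a \<otimes> C j k \<otimes> b, l)"
  by (simp add: rees_mult_def)

lemma n1: "1 \<in> {1..n}" using n2 by simp

lemma cardP:
  assumes "finite X"
  shows "card (Sigma X (\<lambda>x. {k\<in>{1..n}. k = 1 \<or> act x (g k) \<noteq> x})) = fml X act"
proof -
  let ?F = "\<lambda>x. {i \<in> {2..n}. g i \<in> stab G act x}"
  have eq: "{k\<in>{1..n}. k = 1 \<or> act x (g k) \<noteq> x} = {1..n} - ?F x" for x
    using gi by (auto simp: stab_def)
  have le: "card (?F x) \<le> n" for x
  proof -
    have "card (?F x) \<le> card {2..n}" by (rule card_mono) auto
    then show ?thesis by simp
  qed
  have "card (Sigma X (\<lambda>x. {k\<in>{1..n}. k = 1 \<or> act x (g k) \<noteq> x})) = (\<Sum>x\<in>X. n - card (?F x))"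
  proof -
    have "card {k\<in>{1..n}. k = 1 \<or> act x (g k) \<noteq> x} = n - card (?F x)" for x
    proof -
      have "card ({1..n} - ?F x) = card {1..n} - card (?F x)"
        by (rule card_Diff_subset) auto
      then show ?thesis unfolding eq by simp
    qed
    then show ?thesis using assms by simp
  qed
  also have "\<dots> = (\<Sum>x\<in>X. n) - (\<Sum>x\<in>X. card (?F x))"
    using le by (simp add: sum_subtractf_nat)
  also have "\<dots> = fml X act" by (simp add: fml_def mult.commute)
  finally show ?thesis .
qed

lemma lower:
  assumes hp: "\<forall>s\<in>rees_carrier G n. is_partial_transf m (\<phi> s)"
    and inj: "inj_on \<phi> (rees_carrier G n)"
    and hom: "\<forall>s\<in>rees_carrier G n. \<forall>t\<in>rees_carrier G n. \<phi> (rees_mult G C s t) = pcomp (\<phi> s) (\<phi> t)"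
  shows "\<exists>X act. finite X \<and> faithful_right_action G X act \<and> fml X act \<le> m"
proof -
  define E where "E a = \<phi> (1,a,1)" for a
  define e where "e = E \<one>"
  have inS: "(k,a,j) \<in> rees_carrier G n" if "a \<in> carrier G" "k\<in>{1..n}" "j \<in> {1..n}" for k a j
    using that by (simp add: rees_carrier_def)
  have Emul: "E (a \<otimes> b) = pcomp (E a) (E b)" if "a\<in>carrier G" "b\<in>carrier G" for a b
    using hom[rule_format, of "(1,a,1)" "(1,b,1)"] inS[OF that(1) n1 n1] inS[OF that(2) n1 n1] that
    by (simp add: E_def rm C_1j')
  have ptE: "is_partial_transf m (E a)" if "a\<in>carrier G" for a
    using hp inS[OF that n1 n1] by (simp add: E_def)
  have ee: "pcomp e e = e" using Emul[of \<one> \<one>] by (simp add: e_def)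
  define X where "X = {x. x < m \<and> e x = Some x}"
  have Ein: "\<exists>y. E a x = Some y \<and> y \<in> X" if a: "a\<in>carrier G" and x: "x \<in> X" for a x
  proof -
    have "pcomp (E a) (E (inv a)) = e" using Emul[of a "inv a"] a by (simp add: e_def)
    then have "Option.bind (E a x) (E (inv a)) = Some x" using x
      by (metis (mono_tags, lifting) X_def mem_Collect_eq pcomp_def)
    then obtain y where y: "E a x = Some y" by (cases "E a x") auto
    have "pcomp (E a) e = E a" using Emul[of a \<one>] a by (simp add: e_def)
    then have "e y = Some y" using y by (metis bind.simps(2) pcomp_def)
    moreover have "y < m" using ptE[OF a] y by (simp add: is_partial_transf_def)
    ultimately show ?thesis using y X_def by blast
  qed
  define act where "act x a = the (E a x)" for x a
  have actE: "E a x = Some (act x a)" "act x a \<in> X" if "a\<in>carrier G" "x\<in>X" for a x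
    using Ein[OF that] by (auto simp: act_def)
  have ra: "right_action G X act"
    unfolding right_action_def
  proof (intro conjI ballI)
    fix x a assume "x \<in> X" "a \<in> carrier G" then show "act x a \<in> X" using actE by blast
  next
    fix x assume "x \<in> X" then show "act x \<one> = x" by (simp add: act_def X_def e_def)
  next
    fix x a b assume x: "x \<in> X" and a: "a \<in> carrier G" and b: "b \<in> carrier G"
    have "E (a \<otimes> b) x = Option.bind (E a x) (E b)" using Emul[OF a b] by (simp add: pcomp_def)
    also have "\<dots> = E b (act x a)" using actE(1)[OF a x] by simp
    also have "\<dots> = Some (act (act x a) b)" using actE[OF b] actE(2)[OF a x] by blast
    finally show "act (act x a) b = act x (a \<otimes> b)" using actE(1)[OF m_closed[OF a b] x] by simp
  qed
  have fa: "faithful_right_action G X act"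
    unfolding faithful_right_action_def
  proof (intro conjI ra ballI impI)
    fix a assume a: "a \<in> carrier G" and triv: "\<forall>x\<in>X. act x a = x"
    have "E a = e"
    proof
      fix w
      have "E a = pcomp e (E a)" using Emul[of \<one> a] a by (simp add: e_def)
      then have Ew: "E a w = Option.bind (e w) (E a)" by (metis pcomp_def)
      show "E a w = e w"
      proof (cases "e w")
        case None then show ?thesis using Ew by simp
      next
        case (Some x)
        have "e w = e x" using ee Some by (metis bind.simps(2) pcomp_def)
        then have ex: "e x = Some x" using Some by simp
        have "x < m" using ptE[OF one_closed] Some by (simp add: e_def is_partial_transf_def)
        then have xX: "x \<in> X" using ex X_def by simp
        show ?thesis using Ew Some actE(1)[OF a xX] triv xX by simp
      qed
    qed
    then have "\<phi> (1,a,1) = \<phi> (1,\<one>,1)" by (simp add: E_def e_def)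
    then show "a = \<one>" using inj inS[OF a n1 n1] inS[OF one_closed n1 n1] by (meson inj_onD prod.inject)
  qed
  have finX: "finite X"
    by (rule finite_subset[of _ "{..<m}"]) (auto simp: X_def)
  define \<psi> where "\<psi> k x = the (\<phi> (1,\<one>,k) x)" for k x
  have psi: "\<phi> (1,\<one>,k) x = Some (\<psi> k x) \<and> \<psi> k x < m \<and>
      (\<forall>j\<in>{1..n}. \<phi> (j,\<one>,1) (\<psi> k x) = Some (act x (C k j)))"
    if k: "k\<in>{1..n}" and x: "x\<in>X" for k x
  proof -
    have hj: "E (C k j) x = Option.bind (\<phi> (1,\<one>,k) x) (\<phi> (j,\<one>,1))" if j: "j \<in> {1..n}" for j
      using hom[rule_format, OF inS[OF one_closed n1 k] inS[OF one_closed j n1]] C_car[OF k]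
      by (simp add: rm E_def pcomp_def)
    have "E (C k 1) x = Some x" using C_k1[OF k] x by (simp add: X_def e_def)
    then obtain y where y: "\<phi> (1,\<one>,k) x = Some y" using hj[OF n1] by (cases "\<phi> (1,\<one>,k) x") auto
    then have "y < m" using hp inS[OF one_closed n1 k] by (simp add: is_partial_transf_def)
    moreover have "\<forall>j\<in>{1..n}. \<phi> (j,\<one>,1) y = Some (act x (C k j))"
      using hj y actE(1)[OF C_car[OF k] x] by simp
    ultimately show ?thesis using y by (simp add: \<psi>_def)
  qed
  have coll: "x = y \<and> (k \<noteq> l \<longrightarrow> act x (g k) = x \<and> act x (g l) = x)"
    if k: "k\<in>{1..n}" and l: "l\<in>{1..n}" and x: "x\<in>X" and y: "y\<in>X" and eq: "\<psi> k x = \<psi> l y" for k l x y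
  proof -
    have xy: "x = y" using psi[OF k x] psi[OF l y] eq n1 C_k1[OF k] C_k1[OF l]
      by (metis actE(1) one_closed option.inject ra right_action_def x y)
    moreover have "k \<noteq> l \<longrightarrow> act x (g k) = x \<and> act x (g l) = x"
    proof
      assume kl: "k \<noteq> l"
      have "act x (C k k) = act x (C l k)" "act x (C k l) = act x (C l l)"
        using psi[OF k x] psi[OF l x] eq xy k l by auto
      then show "act x (g k) = x \<and> act x (g l) = x" using kl C_kk C_ne ra x
        by (simp add: right_action_def)
    qed
    ultimately show ?thesis by blast
  qed
  define P where "P = Sigma X (\<lambda>x. {k\<in>{1..n}. k = 1 \<or> act x (g k) \<noteq> x})"
  have injP: "inj_on (\<lambda>(x,k). \<psi> k x) P"
  proof (rule inj_onI)
    fix p q assume p: "p \<in> P" and q: "q \<in> P" and eq: "(\<lambda>(x,k). \<psi> k x) p = (\<lambda>(x,k). \<psi> k x) q"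
    obtain x k where pk: "p = (x,k)" by (cases p)
    obtain y l where ql: "q = (y,l)" by (cases q)
    have k: "k \<in> {1..n}" "k = 1 \<or> act x (g k) \<noteq> x" "x \<in> X" using p pk P_def by auto
    have l: "l \<in> {1..n}" "l = 1 \<or> act y (g l) \<noteq> y" "y \<in> X" using q ql P_def by auto
    have "\<psi> k x = \<psi> l y" using eq pk ql by simp
    from coll[OF k(1) l(1) k(3) l(3) this] have "x = y" "k \<noteq> l \<longrightarrow> act x (g k) = x \<and> act x (g l) = x" by auto
    then have "k = l" using k l g1 by (metis)
    then show "p = q" using pk ql \<open>x = y\<close> by simp
  qed
  have imP: "(\<lambda>(x,k). \<psi> k x) ` P \<subseteq> {..<m}" using psi by (auto simp: P_def)
  have "card P \<le> card {..<m}" by (rule card_inj_on_le[OF injP imP]) simp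
  then have "fml X act \<le> m" using cardP[OF finX, of act] by (simp add: P_def)
  then show ?thesis using finX fa by blast
qed

lemma upper:
  assumes finX: "finite X" and fa: "faithful_right_action G X act"
  shows "\<exists>\<phi>. (\<forall>s\<in>rees_carrier G n. is_total_transf (fml X act) (\<phi> s)) \<and> inj_on \<phi> (rees_carrier G n) \<and>
       (\<forall>s\<in>rees_carrier G n. \<forall>t\<in>rees_carrier G n. \<phi> (rees_mult G C s t) = \<phi> t \<circ> \<phi> s)"
proof -
  let ?S = "rees_carrier G n"
  have ra: "right_action G X act" using fa by (simp add: faithful_right_action_def)
  have cl: "act x a \<in> X" if "x \<in> X" "a \<in> carrier G" for x a using ra that by (simp add: right_action_def)
  have one: "act x \<one> = x" if "x \<in> X" for x using ra that by (simp add: right_action_def)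
  have comp: "act (act x a) b = act x (a \<otimes> b)" if "x \<in> X" "a \<in> carrier G" "b \<in> carrier G" for x a b
    using ra that by (simp add: right_action_def)
  have canc: "y = z" if "y \<in> X" "z \<in> X" "a \<in> carrier G" "act y a = act z a" for y z a
  proof -
    have "act (act y a) (inv a) = act (act z a) (inv a)" using that by simp
    moreover have "act (act y a) (inv a) = y" using comp[OF that(1,3) inv_closed[OF that(3)]] one[OF that(1)] that(3) by (simp add: r_inv)
    moreover have "act (act z a) (inv a) = z" using comp[OF that(2,3) inv_closed[OF that(3)]] one[OF that(2)] that(3) by (simp add: r_inv)
    ultimately show ?thesis by simp
  qed
  have moved: "\<exists>x\<in>X. act x h \<noteq> x" if "h \<in> carrier G" "h \<noteq> \<one>" for h
    using fa that by (auto simp: faithful_right_action_def)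
  define B where "B p s = (act (fst p) (C (snd p) (fst s) \<otimes> fst (snd s)), snd (snd s))"
    for p :: "nat \<times> nat" and s :: "nat \<times> 'a \<times> nat"
  define r where "r q = (if act (fst q) (g (snd q)) = fst q then (fst q, 1::nat) else q)" for q :: "nat \<times> nat"
  define A where "A p s = r (B p s)" for p s
  define P where "P = Sigma X (\<lambda>x. {k\<in>{1..n}. k = 1 \<or> act x (g k) \<noteq> x})"
  let ?XN = "X \<times> {1..n}"
  have Sdest: "fst s \<in> {1..n} \<and> fst (snd s) \<in> carrier G \<and> snd (snd s) \<in> {1..n}" if "s \<in> ?S" for s
    using that by (auto simp: rees_carrier_def)
  have PXN: "P \<subseteq> ?XN" by (auto simp: P_def)
  have rP: "r q \<in> P" if "q \<in> ?XN" for q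
    using that n1 by (auto simp: r_def P_def)
  have Bcl: "B q s \<in> ?XN" if "q \<in> ?XN" "s \<in> ?S" for q s
    using that Sdest[OF that(2)] cl C_car by (auto simp: B_def)
  have Bcong: "B (r q) s = B q s" if q: "q \<in> ?XN" and s: "s \<in> ?S" for q s
  proof (cases "act (fst q) (g (snd q)) = fst q")
    case False then show ?thesis by (simp add: r_def)
  next
    case True
    obtain x k where qk: "q = (x,k)" by (cases q)
    obtain j a l where sj: "s = (j,a,l)" by (cases s)
    have x: "x \<in> X" and k: "k \<in> {1..n}" using q qk by auto
    have a: "a \<in> carrier G" and j: "j \<in> {1..n}" using Sdest[OF s] sj by auto
    have fx: "act x (g k) = x" using True qk by simp
    have "act x (C k j \<otimes> a) = act x a"
    proof (cases "j = k")
      case True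
      then show ?thesis using fx comp[OF x g_car[OF k] a] C_kk by simp
    next
      case False
      then show ?thesis using C_ne[of k j] a by simp
    qed
    then show ?thesis using True qk sj a by (simp add: r_def B_def C_1j')
  qed
  have Bassoc: "B (B q s) t = B q (rees_mult G C s t)" if q: "q \<in> ?XN" and s: "s \<in> ?S" and t: "t \<in> ?S" for q s t
  proof -
    obtain x k where qk: "q = (x,k)" by (cases q)
    obtain j a l where sj: "s = (j,a,l)" by (cases s)
    obtain j' a' l' where tj: "t = (j',a',l')" by (cases t)
    have x: "x \<in> X" and k: "k \<in> {1..n}" using q qk by auto
    have a: "a \<in> carrier G" and j: "j \<in> {1..n}" and l: "l \<in> {1..n}" using Sdest[OF s] sj by auto
    have a': "a' \<in> carrier G" using Sdest[OF t] tj by auto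
    have "act (act x (C k j \<otimes> a)) (C l j' \<otimes> a') = act x ((C k j \<otimes> a) \<otimes> (C l j' \<otimes> a'))"
      using comp x C_car[OF k] C_car[OF l] a a' by simp
    also have "(C k j \<otimes> a) \<otimes> (C l j' \<otimes> a') = C k j \<otimes> (a \<otimes> C l j' \<otimes> a')"
      using C_car[OF k] C_car[OF l] a a' by (simp add: m_assoc)
    finally show ?thesis using qk sj tj by (simp add: B_def rm)
  qed
  have Acl: "A q s \<in> P" if "q \<in> ?XN" "s \<in> ?S" for q s
    using rP Bcl that by (simp add: A_def)
  have Aassoc: "A (A q s) t = A q (rees_mult G C s t)" if q: "q \<in> ?XN" and s: "s \<in> ?S" and t: "t \<in> ?S" for q s t
    using Bcong[OF Bcl[OF q s] t] Bassoc[OF q s t] by (simp add: A_def)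
  have fstr: "fst (r q) = fst q" for q by (simp add: r_def)
  have sndr: "snd (r q) = 1 \<or> snd (r q) = snd q" for q by (simp add: r_def)
  have rid: "act (fst q) (g (snd q)) \<noteq> fst q \<Longrightarrow> r q = q" for q by (simp add: r_def)
  have x1P: "(x, 1) \<in> P" if "x \<in> X" for x using that n1 by (simp add: P_def)
  have A1: "A (x,1) (j,a,l) = r (act x a, l)" if "x \<in> X" "a \<in> carrier G" for x a j l
    using that by (simp add: A_def B_def C_1j')
  have faith: "s = s'" if s: "s \<in> ?S" and s': "s' \<in> ?S" and eq: "\<forall>p\<in>P. A p s = A p s'" for s s'
  proof -
    obtain j a l where sj: "s = (j,a,l)" by (cases s)
    obtain j' a' l' where sj': "s' = (j',a',l')" by (cases s')
    have a: "a \<in> carrier G" and j: "j \<in> {1..n}" and l: "l \<in> {1..n}" using Sdest[OF s] sj by auto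
    have a': "a' \<in> carrier G" and j': "j' \<in> {1..n}" and l': "l' \<in> {1..n}" using Sdest[OF s'] sj' by auto
    have lstep: "l1 = l2" if a1: "a1 \<in> carrier G" and a2: "a2 \<in> carrier G" and l1: "l1 \<in> {2..n}"
      and e: "\<forall>x\<in>X. A (x,1) (j1,a1,l1) = A (x,1) (j2,a2,l2)" for j1 a1 l1 j2 a2 l2
    proof -
      obtain y where y: "y \<in> X" "act y (g l1) \<noteq> y" using moved gi l1 by blast
      define x where "x = act y (inv a1)"
      have x: "x \<in> X" using cl y a1 by (simp add: x_def)
      have "act x a1 = y" using comp[OF y(1) inv_closed[OF a1] a1] a1 one[OF y(1)] by (simp add: x_def l_inv)
      then have "A (x,1) (j1,a1,l1) = (y, l1)" using A1[OF x a1] rid y by simp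
      then have "snd (r (act x a2, l2)) = l1" using e x A1[OF x a2] by simp
      then show ?thesis using sndr[of "(act x a2, l2)"] l1 by auto
    qed
    have eqX: "\<forall>x\<in>X. A (x,1) s = A (x,1) s'" using eq x1P by blast
    have ll: "l = l'"
    proof (cases "l \<ge> 2")
      case True then show ?thesis using lstep[OF a a', of l j j' l'] eqX sj sj' l by auto
    next
      case False note F = this
      show ?thesis
      proof (cases "l' \<ge> 2")
        case True then show ?thesis using lstep[OF a' a, of l' j' j l] eqX sj sj' l' by auto
      next
        case False then show ?thesis using F l l' by auto
      qed
    qed
    have aa: "a = a'"
    proof -
      have "act x a = act x a'" if x: "x \<in> X" for x
        using eqX x A1[OF x a] A1[OF x a'] fstr sj sj' by (metis fst_conv)
      then have "act x (a \<otimes> inv a') = x" if x: "x \<in> X" for x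
        using x comp[OF x a inv_closed[OF a']] comp[OF x a' inv_closed[OF a']] one[OF x] a'
        by (simp add: r_inv)
      then have "a \<otimes> inv a' = \<one>" using fa a a' by (simp add: faithful_right_action_def)
      then show ?thesis using a a' by (metis inv_closed inv_equality inv_inv)
    qed
    have jstep: "False" if j1: "j1 \<in> {2..n}" and j2: "j2 \<noteq> j1"
      and e: "\<forall>p\<in>P. A p (j1,a,l) = A p (j2,a,l)" for j1 j2
    proof -
      obtain x where x: "x \<in> X" "act x (g j1) \<noteq> x" using moved gi j1 by blast
      have xP: "(x,j1) \<in> P" using x j1 by (auto simp: P_def)
      have "fst (A (x,j1) (j1,a,l)) = act x (g j1 \<otimes> a)" by (simp add: A_def B_def fstr C_kk)
      moreover have "fst (A (x,j1) (j2,a,l)) = act x a" using j2 a by (simp add: A_def B_def fstr C_ne)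
      ultimately have "act x (g j1 \<otimes> a) = act x a" using e xP by metis
      then have "act (act x (g j1)) a = act x a" using comp[OF x(1) _ a] gi j1 by simp
      then have "act x (g j1) = x" using canc cl x(1) gi j1 a by blast
      then show False using x by simp
    qed
    have jj: "j = j'"
    proof (rule ccontr)
      assume ne: "j \<noteq> j'"
      show False
      proof (cases "j \<ge> 2")
        case True then show ?thesis using jstep[of j j'] ne eq sj sj' ll aa j by auto
      next
        case False
        then have "j' \<in> {2..n}" using ne j j' by auto
        then show ?thesis using jstep[of j' j] ne eq sj sj' ll aa by auto
      qed
    qed
    show ?thesis using sj sj' jj aa ll by simp
  qed
  have finP: "finite P" using finX by (simp add: P_def)
  have cP: "card P = fml X act" using cardP[OF finX, of act] by (simp add: P_def)
  obtain enc where enc: "bij_betw enc P {0..<fml X act}" using ex_bij_betw_finite_nat[OF finP] cP by metis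
  define dec where "dec = inv_into P enc"
  have dec_in: "dec y \<in> P" if "y < fml X act" for y
    using enc that by (metis atLeastLessThan_iff bij_betw_def dec_def inv_into_into zero_le)
  have enc_dec: "enc (dec y) = y" if "y < fml X act" for y
    using enc that by (metis atLeastLessThan_iff bij_betw_def dec_def f_inv_into_f zero_le)
  have dec_enc: "dec (enc p) = p" if "p \<in> P" for p
    using enc that by (metis bij_betw_def dec_def inv_into_f_f)
  have enc_lt: "enc p < fml X act" if "p \<in> P" for p
    using enc that by (auto simp: bij_betw_def)
  define \<phi> where "\<phi> s = (\<lambda>y. if y < fml X act then enc (A (dec y) s) else y)" for s
  have t1: "\<forall>s\<in>?S. is_total_transf (fml X act) (\<phi> s)"
  proof (intro ballI)
    fix s assume s: "s \<in> ?S"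
    have "enc (A (dec y) s) < fml X act" if "y < fml X act" for y
      using enc_lt[OF Acl[OF subsetD[OF PXN dec_in[OF that]] s]] .
    then show "is_total_transf (fml X act) (\<phi> s)" by (auto simp: is_total_transf_def \<phi>_def)
  qed
  have t2: "inj_on \<phi> ?S"
  proof (rule inj_onI)
    fix s s' assume s: "s \<in> ?S" and s': "s' \<in> ?S" and e: "\<phi> s = \<phi> s'"
    have "A p s = A p s'" if p: "p \<in> P" for p
    proof -
      have "\<phi> s (enc p) = \<phi> s' (enc p)" using e by simp
      then have "enc (A p s) = enc (A p s')" using enc_lt[OF p] dec_enc[OF p] by (simp add: \<phi>_def)
      then show ?thesis using enc Acl s s' p PXN by (meson bij_betw_def inj_onD subsetD)
    qed
    then show "s = s'" using faith s s' by blast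
  qed
  have t3: "\<forall>s\<in>?S. \<forall>t\<in>?S. \<phi> (rees_mult G C s t) = \<phi> t \<circ> \<phi> s"
  proof (intro ballI ext)
    fix s t y assume s: "s \<in> ?S" and t: "t \<in> ?S"
    show "\<phi> (rees_mult G C s t) y = (\<phi> t \<circ> \<phi> s) y"
    proof (cases "y < fml X act")
      case True
      have d: "dec y \<in> ?XN" using dec_in[OF True] PXN by blast
      have "A (dec y) s \<in> P" using Acl[OF d s] .
      then show ?thesis using True enc_lt dec_enc Aassoc[OF d s t] by (simp add: \<phi>_def)
    next
      case False then show ?thesis by (simp add: \<phi>_def)
    qed
  qed
  show ?thesis using t1 t2 t3 by blast
qed

lemma regular: "\<exists>(X::nat set) act. finite X \<and> faithful_right_action G X act"
proof -
  obtain h where h: "bij_betw h (carrier G) {0..<card (carrier G)}" using ex_bij_betw_finite_nat[OF fin] by blast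
  define X where "X = {0..<card (carrier G)}"
  define act where "act x a = h (inv_into (carrier G) h x \<otimes> a)" for x a
  have iv: "inv_into (carrier G) h x \<in> carrier G" if "x \<in> X" for x
    using h that by (metis X_def bij_betw_def inv_into_into)
  have hi: "h (inv_into (carrier G) h x) = x" if "x \<in> X" for x
    using h that by (metis X_def bij_betw_def f_inv_into_f)
  have ih: "inv_into (carrier G) h (h a) = a" if "a \<in> carrier G" for a
    using h that by (metis bij_betw_def inv_into_f_f)
  have hX: "h a \<in> X" if "a \<in> carrier G" for a using h that by (auto simp: bij_betw_def X_def)
  have ra: "right_action G X act" unfolding right_action_def
  proof (intro conjI ballI)
    fix x a assume x: "x \<in> X" and a: "a \<in> carrier G"
    show "act x a \<in> X" unfolding act_def using hX iv[OF x] a by blast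
  next
    fix x assume x: "x \<in> X"
    show "act x \<one> = x" unfolding act_def using iv[OF x] hi[OF x] by simp
  next
    fix x a b assume x: "x \<in> X" and a: "a \<in> carrier G" and b: "b \<in> carrier G"
    have "inv_into (carrier G) h (act x a) = inv_into (carrier G) h x \<otimes> a"
      unfolding act_def using ih iv[OF x] a by blast
    then show "act (act x a) b = act x (a \<otimes> b)"
      unfolding act_def using iv[OF x] a b by (simp add: m_assoc act_def)
  qed
  have "faithful_right_action G X act" unfolding faithful_right_action_def
  proof (intro conjI ra ballI impI)
    fix a assume a: "a \<in> carrier G" and tr: "\<forall>x\<in>X. act x a = x"
    have "h (\<one> \<otimes> a) = h \<one>" using tr[rule_format, OF hX[OF one_closed]] by (simp add: act_def ih)
    then show "a = \<one>" using h a by (simp add: bij_betw_def inj_on_def)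
  qed
  then show ?thesis using X_def by blast
qed

lemma main:
  "min_partial_degree (rees_carrier G n) (rees_mult G C) =
     (LEAST k. \<exists>(X :: nat set) act. finite X \<and> faithful_right_action G X act \<and> k = fml X act)
   \<and> min_total_degree (rees_carrier G n) (rees_mult G C) =
     (LEAST k. \<exists>(X :: nat set) act. finite X \<and> faithful_right_action G X act \<and> k = fml X act)"
proof -
  let ?S = "rees_carrier G n" and ?M = "rees_mult G C"
  let ?Q = "\<lambda>k. \<exists>(X :: nat set) act. finite X \<and> faithful_right_action G X act \<and> k = fml X act"
  let ?TP = "\<lambda>m. \<exists>\<phi>. (\<forall>s\<in>?S. is_total_transf m (\<phi> s)) \<and> inj_on \<phi> ?S \<and>
       (\<forall>s\<in>?S. \<forall>t\<in>?S. \<phi> (?M s t) = \<phi> t \<circ> \<phi> s)"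
  let ?PP = "\<lambda>m. \<exists>\<phi>. (\<forall>s\<in>?S. is_partial_transf m (\<phi> s)) \<and> inj_on \<phi> ?S \<and>
       (\<forall>s\<in>?S. \<forall>t\<in>?S. \<phi> (?M s t) = pcomp (\<phi> s) (\<phi> t))"
  define K where "K = (LEAST k. ?Q k)"
  obtain Xr actr where r: "finite (Xr::nat set)" "faithful_right_action G Xr actr" using regular by blast
  have QK: "?Q K" unfolding K_def
    by (rule LeastI[of ?Q "fml Xr actr"]) (use r in blast)
  then obtain X0 act0 where X0: "finite X0" "faithful_right_action G X0 act0" "K = fml X0 act0" by blast
  have TK: "?TP K" using upper[OF X0(1,2)] X0(3) by simp
  have t_le: "min_total_degree ?S ?M \<le> K" unfolding min_total_degree_def using TK by (rule Least_le)
  have Tmin: "?TP (min_total_degree ?S ?M)" unfolding min_total_degree_def using TK by (rule LeastI)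
  have "?PP (min_total_degree ?S ?M)" using Tmin total_to_partial by blast
  then have p_le: "min_partial_degree ?S ?M \<le> min_total_degree ?S ?M"
    unfolding min_partial_degree_def by (rule Least_le)
  have Pmin: "?PP (min_partial_degree ?S ?M)"
    unfolding min_partial_degree_def using \<open>?PP (min_total_degree ?S ?M)\<close> by (rule LeastI)
  then obtain \<phi> where "(\<forall>s\<in>?S. is_partial_transf (min_partial_degree ?S ?M) (\<phi> s))" "inj_on \<phi> ?S"
       "(\<forall>s\<in>?S. \<forall>t\<in>?S. \<phi> (?M s t) = pcomp (\<phi> s) (\<phi> t))" by blast
  from lower[OF this] obtain X act where "finite X" "faithful_right_action G X act"
     "fml X act \<le> min_partial_degree ?S ?M" by blast
  moreover have "K \<le> fml X act" unfolding K_def using calculation by (intro Least_le) blast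
  ultimately have "K \<le> min_partial_degree ?S ?M" by simp
  then show ?thesis using t_le p_le K_def by simp
qed

lemma special:
  assumes "\<forall>i\<in>{2..n}. g i = g 2" and "finite X" and "faithful_right_action G X act"
  shows "fml X act = n * card X - (n - 1) * card {x \<in> X. act x (g 2) = x}"
proof -
  have g2: "g 2 \<in> carrier G" using gi n2 by auto
  have "card {i \<in> {2..n}. g i \<in> stab G act x} = (if act x (g 2) = x then n - 1 else 0)" for x
  proof -
    have "{i \<in> {2..n}. g i \<in> stab G act x} = (if act x (g 2) = x then {2..n} else {})"
    proof (cases "act x (g 2) = x")
      case True
      then have "\<forall>i\<in>{2..n}. g i \<in> stab G act x" using assms(1) g2 by (metis (mono_tags, lifting) mem_Collect_eq stab_def)
      then show ?thesis using True by auto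
    next
      case False
      then have "\<forall>i\<in>{2..n}. g i \<notin> stab G act x" using assms(1) by (metis (mono_tags, lifting) mem_Collect_eq stab_def)
      then show ?thesis using False by auto
    qed
    then show ?thesis by simp
  qed
  then have "(\<Sum>x\<in>X. card {i \<in> {2..n}. g i \<in> stab G act x}) = (\<Sum>x\<in>X. if act x (g 2) = x then n - 1 else 0)"
    by simp
  also have "\<dots> = (\<Sum>x\<in>{x \<in> X. act x (g 2) = x}. n - 1)"
    using assms(2) by (simp add: sum.inter_filter[symmetric])
  also have "\<dots> = (n - 1) * card {x \<in> X. act x (g 2) = x}" by simp
  finally show ?thesis by (simp add: fml_def)
qed

end

theorem proposition2p16:
  fixes G :: "('a, 'b) monoid_scheme" and n :: nat and g :: "nat \<Rightarrow> 'a"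
    and C :: "nat \<Rightarrow> nat \<Rightarrow> 'a"
  assumes "group G" and "finite (carrier G)" and "n \<ge> 2"
    and "g 1 = \<one>\<^bsub>G\<^esub>"
    and "\<forall>i\<in>{2..n}. g i \<in> carrier G \<and> g i \<noteq> \<one>\<^bsub>G\<^esub>"
    and "\<forall>i j. C i j = (if i = j then g i else \<one>\<^bsub>G\<^esub>)"
  shows "min_partial_degree (rees_carrier G n) (rees_mult G C) =
           (LEAST k. \<exists>(X :: nat set) act. finite X \<and> faithful_right_action G X act \<and>
              k = n * card X - (\<Sum>x\<in>X. card {i \<in> {2..n}. g i \<in> stab G act x}))
       \<and> min_total_degree (rees_carrier G n) (rees_mult G C) =
           (LEAST k. \<exists>(X :: nat set) act. finite X \<and> faithful_right_action G X act \<and>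
              k = n * card X - (\<Sum>x\<in>X. card {i \<in> {2..n}. g i \<in> stab G act x}))
       \<and> ((\<forall>i\<in>{2..n}. g i = g 2) \<longrightarrow>
           min_partial_degree (rees_carrier G n) (rees_mult G C) =
             (LEAST k. \<exists>(X :: nat set) act. finite X \<and> faithful_right_action G X act \<and>
                k = n * card X - (n - 1) * card {x \<in> X. act x (g 2) = x})
         \<and> min_total_degree (rees_carrier G n) (rees_mult G C) =
             (LEAST k. \<exists>(X :: nat set) act. finite X \<and> faithful_right_action G X act \<and>
                k = n * card X - (n - 1) * card {x \<in> X. act x (g 2) = x}))"
proof -
  interpret R: rees_ctx G n g C
    using assms by (intro rees_ctx.intro rees_ctx_axioms.intro) auto
  have M: "min_partial_degree (rees_carrier G n) (rees_mult G C) =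
     (LEAST k. \<exists>(X :: nat set) act. finite X \<and> faithful_right_action G X act \<and> k = R.fml X act)
   \<and> min_total_degree (rees_carrier G n) (rees_mult G C) =
     (LEAST k. \<exists>(X :: nat set) act. finite X \<and> faithful_right_action G X act \<and> k = R.fml X act)"
    by (rule R.main)
  have sp: "(\<forall>i\<in>{2..n}. g i = g 2) \<longrightarrow>
     (\<lambda>k. \<exists>(X :: nat set) act. finite X \<and> faithful_right_action G X act \<and> k = R.fml X act) =
     (\<lambda>k. \<exists>(X :: nat set) act. finite X \<and> faithful_right_action G X act \<and>
                k = n * card X - (n - 1) * card {x \<in> X. act x (g 2) = x})"
  proof
    assume h: "\<forall>i\<in>{2..n}. g i = g 2"
    show "(\<lambda>k. \<exists>(X :: nat set) act. finite X \<and> faithful_right_action G X act \<and> k = R.fml X act) =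
     (\<lambda>k. \<exists>(X :: nat set) act. finite X \<and> faithful_right_action G X act \<and>
                k = n * card X - (n - 1) * card {x \<in> X. act x (g 2) = x})"
    proof (rule ext, rule iffI)
      fix k assume "\<exists>(X :: nat set) act. finite X \<and> faithful_right_action G X act \<and> k = R.fml X act"
      then obtain X act where X: "finite (X::nat set)" "faithful_right_action G X act" "k = R.fml X act" by blast
      then have "k = n * card X - (n - 1) * card {x \<in> X. act x (g 2) = x}" using R.special[OF h X(1,2)] by simp
      then show "\<exists>(X :: nat set) act. finite X \<and> faithful_right_action G X act \<and>
                k = n * card X - (n - 1) * card {x \<in> X. act x (g 2) = x}"
        using X(1,2) by blast
    next
      fix k assume "\<exists>(X :: nat set) act. finite X \<and> faithful_right_action G X act \<and>
                k = n * card X - (n - 1) * card {x \<in> X. act x (g 2) = x}"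
      then obtain X act where X: "finite (X::nat set)" "faithful_right_action G X act"
          "k = n * card X - (n - 1) * card {x \<in> X. act x (g 2) = x}" by blast
      then have "k = R.fml X act" using R.special[OF h X(1,2)] by simp
      then show "\<exists>(X :: nat set) act. finite X \<and> faithful_right_action G X act \<and> k = R.fml X act"
        using X(1,2) by blast
    qed
  qed
  show ?thesis
  proof (intro conjI impI)
    show "min_partial_degree (rees_carrier G n) (rees_mult G C) =
           (LEAST k. \<exists>(X :: nat set) act. finite X \<and> faithful_right_action G X act \<and>
              k = n * card X - (\<Sum>x\<in>X. card {i \<in> {2..n}. g i \<in> stab G act x}))"
      using M[THEN conjunct1] unfolding R.fml_def .
    show "min_total_degree (rees_carrier G n) (rees_mult G C) =
           (LEAST k. \<exists>(X :: nat set) act. finite X \<and> faithful_right_action G X act \<and>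
              k = n * card X - (\<Sum>x\<in>X. card {i \<in> {2..n}. g i \<in> stab G act x}))"
      using M[THEN conjunct2] unfolding R.fml_def .
  next
    assume h: "\<forall>i\<in>{2..n}. g i = g 2"
    show "min_partial_degree (rees_carrier G n) (rees_mult G C) =
             (LEAST k. \<exists>(X :: nat set) act. finite X \<and> faithful_right_action G X act \<and>
                k = n * card X - (n - 1) * card {x \<in> X. act x (g 2) = x})"
      using M[THEN conjunct1] arg_cong[OF sp[THEN mp, OF h], of Least] by (rule trans)
    show "min_total_degree (rees_carrier G n) (rees_mult G C) =
             (LEAST k. \<exists>(X :: nat set) act. finite X \<and> faithful_right_action G X act \<and>
                k = n * card X - (n - 1) * card {x \<in> X. act x (g 2) = x})"
      using M[THEN conjunct2] arg_cong[OF sp[THEN mp, OF h], of Least] by (rule trans)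
  qed
qed

end
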